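(* The group $Fr(162\times 4)$ is not isomorphic to any finite subgroup of $U(2)$; equivalently, it is not isomorphic to any finite subgroup of $SU(3)$ consisting of matrices of the block form $\begin{pmatrix}\det(M)^{-1}&0\\0&M\end{pmatrix}$ with $M\in U(2)$ (type $(B)$).
   Context: Let $\omega=e^{2i\pi/3}$, $J$ the $3\times3$ antidiagonal matrix with antidiagonal entries $1$, $G_1=\mathrm{diag}(e^{7i\pi/9},-e^{4i\pi/9},-e^{7i\pi/9})$, $G_2=\begin{pmatrix}-\tfrac12 e^{4i\pi/9}&\tfrac{1}{\sqrt2}e^{7i\pi/9}&\tfrac12 e^{4i\pi/9}\\ \tfrac{1}{\sqrt2}e^{7i\pi/9}&0&\tfrac{1}{\sqrt2}e^{7i\pi/9}\\ \tfrac12 e^{4i\pi/9}&\tfrac{1}{\sqrt2}e^{7i\pi/9}&-\tfrac12 e^{4i\pi/9}\end{pmatrix}$, $FUM=-\omega J$, and $Fr(162\times 4)=\langle G_1,G_2,FUM\rangle\subset SU(3)$. *)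

theory Defs
  imports "HOL-Analysis.Analysis" "HOL-Algebra.Generated_Groups"
begin

definition ctrans :: "complex^'n^'n \<Rightarrow> complex^'n^'n" where
  "ctrans A = (\<chi> i j. cnj (A $ j $ i))"

definition unitary_set :: "(complex^'n^'n) set" where
  "unitary_set = {A. A ** ctrans A = mat 1 \<and> ctrans A ** A = mat 1}"

definition special_unitary_set :: "(complex^'n^'n) set" where
  "special_unitary_set = {A. A \<in> unitary_set \<and> det A = 1}"

definition U_grp :: "(complex^'n^'n) monoid" where
  "U_grp = \<lparr>carrier = unitary_set, mult = (**), one = mat 1\<rparr>"

definition SU_grp :: "(complex^'n^'n) monoid" where
  "SU_grp = \<lparr>carrier = special_unitary_set, mult = (**), one = mat 1\<rparr>"

definition omega :: complex where
  "omega = exp (2 * \<i> * pi / 3)"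

definition e79 :: complex where "e79 = exp (7 * \<i> * pi / 9)"
definition e49 :: complex where "e49 = exp (4 * \<i> * pi / 9)"

definition Jmat :: "complex^3^3" where
  "Jmat = vector [vector [0, 0, 1], vector [0, 1, 0], vector [1, 0, 0]]"

definition G1 :: "complex^3^3" where
  "G1 = vector [vector [e79, 0, 0], vector [0, - e49, 0], vector [0, 0, - e79]]"

definition G2 :: "complex^3^3" where
  "G2 = vector [
     vector [- e49 / 2, e79 / complex_of_real (sqrt 2), e49 / 2],
     vector [e79 / complex_of_real (sqrt 2), 0, e79 / complex_of_real (sqrt 2)],
     vector [e49 / 2, e79 / complex_of_real (sqrt 2), - e49 / 2]]"

definition FUM :: "complex^3^3" where
  "FUM = (\<chi> i j. - omega * Jmat $ i $ j)"

definition Fr :: "(complex^3^3) set" where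
  "Fr = generate (SU_grp :: (complex^3^3) monoid) {G1, G2, FUM}"

end

theory Submission
  imports Defs
begin

lemma mat2_eq: "(A::'a^2^2) = B \<longleftrightarrow> A$1$1=B$1$1 \<and> A$1$2=B$1$2 \<and> A$2$1=B$2$1 \<and> A$2$2=B$2$2"
  by (auto simp add: vec_eq_iff forall_2)

lemma mult2: "((A::'a::semiring_1^2^2) ** B)$i$j = A$i$1*B$1$j + A$i$2*B$2$j"
  by (simp add: matrix_matrix_mult_def sum_2)

lemma key_comm:
  fixes a b c d a2 b2 c2 d2 p q r t :: complex
  assumes "\<not> (q = 0 \<and> r = 0 \<and> p = t)"
   and "p*a+q*c = a*p+b*r" "p*b+q*d = a*q+b*t" "r*a+t*c = c*p+d*r" "r*b+t*d = c*q+d*t"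
   and "p*a2+q*c2 = a2*p+b2*r" "p*b2+q*d2 = a2*q+b2*t" "r*a2+t*c2 = c2*p+d2*r" "r*b2+t*d2 = c2*q+d2*t"
  shows "a*a2+b*c2 = a2*a+b2*c \<and> a*b2+b*d2 = a2*b+b2*d \<and> c*a2+d*c2 = c2*a+d2*c \<and> c*b2+d*d2 = c2*b+d2*d"
  using assms by algebra

lemma key2:
  fixes X Y C :: "complex^2^2"
  assumes dX: "det X \<noteq> 0" and dY: "det Y \<noteq> 0"
    and h: "X ** Y = C ** (Y ** X)" and cX: "C ** X = X ** C" and cY: "C ** Y = Y ** C"
  shows "C ** C = mat 1"
proof (cases "C$1$2 = 0 \<and> C$2$1 = 0 \<and> C$1$1 = C$2$2")
  case True
  have "det (X ** Y) = det C * det (Y ** X)" using h by (simp add: det_mul)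
  hence "det X * det Y = det C * (det X * det Y)" by (simp add: det_mul mult.commute)
  hence "det C = 1" using dX dY by simp
  hence "C$1$1 * C$1$1 = 1" using True by (simp add: det_2)
  thus ?thesis using True by (simp add: mat2_eq mult2 mat_def)
next
  case False
  have e1: "X ** Y = Y ** X"
    using key_comm[OF False, of "X$1$1" "X$2$1" "X$1$2" "X$2$2" "Y$1$1" "Y$2$1" "Y$1$2" "Y$2$2"]
      cX cY by (simp add: mat2_eq mult2)
  have "invertible (Y ** X)" using dX dY by (simp add: invertible_det_nz det_mul)
  then obtain Z where Z: "(Y ** X) ** Z = mat 1" unfolding invertible_def by blast
  have "C = C ** ((Y ** X) ** Z)" using Z by (simp add: matrix_mul_rid)
  also have "\<dots> = (C ** (Y ** X)) ** Z" by (simp add: matrix_mul_assoc)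
  also have "\<dots> = mat 1" using h e1 Z by simp
  finally show ?thesis by (simp add: matrix_mul_lid)
qed

definition xq :: complex where "xq = exp (\<i> * pi / 9)"
definition sq :: complex where "sq = complex_of_real (sqrt 2)"

definition M3 :: "complex \<Rightarrow> complex \<Rightarrow> complex \<Rightarrow> complex \<Rightarrow> complex \<Rightarrow> complex \<Rightarrow> complex \<Rightarrow> complex \<Rightarrow> complex \<Rightarrow> complex^3^3" where
  "M3 a b c d e f g h k = vector [vector [a,b,c], vector [d,e,f], vector [g,h,k]]"

lemma M3_eq: "M3 a b c d e f g h k = M3 a' b' c' d' e' f' g' h' k' \<longleftrightarrow>
   a = a' \<and> b = b' \<and> c = c' \<and> d = d' \<and> e = e' \<and> f = f' \<and> g = g' \<and> h = h' \<and> k = k'"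
  by (auto simp: M3_def vec_eq_iff forall_3)

lemma M3_mult: "M3 a b c d e f g h k ** M3 a' b' c' d' e' f' g' h' k' =
  M3 (a*a'+b*d'+c*g') (a*b'+b*e'+c*h') (a*c'+b*f'+c*k')
     (d*a'+e*d'+f*g') (d*b'+e*e'+f*h') (d*c'+e*f'+f*k')
     (g*a'+h*d'+k*g') (g*b'+h*e'+k*h') (g*c'+h*f'+k*k')"
  by (simp add: M3_def vec_eq_iff forall_3 matrix_matrix_mult_def sum_3)

lemma M3_scalar_comm: "M3 z 0 0 0 z 0 0 0 z ** X = X ** M3 z 0 0 0 z 0 0 0 z"
  by (simp add: M3_def vec_eq_iff forall_3 matrix_matrix_mult_def sum_3 mult.commute)

lemma xq_pow: "xq ^ n = exp (of_nat n * (\<i> * pi / 9))"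
  by (simp add: xq_def exp_of_nat_mult[symmetric] algebra_simps)

lemma e79_eq: "e79 = xq ^ 7"
  unfolding xq_pow e79_def by (simp add: algebra_simps)
lemma e49_eq: "e49 = xq ^ 4"
  unfolding xq_pow e49_def by (simp add: algebra_simps)
lemma omega_eq: "omega = xq ^ 6"
  unfolding xq_pow omega_def by (simp add: algebra_simps)

lemma xq3: "xq ^ 3 = Complex (1/2) (sqrt 3 / 2)"
proof -
  have "xq ^ 3 = exp (\<i> * complex_of_real (pi / 3))" unfolding xq_pow by (simp add: algebra_simps)
  also have "\<dots> = cis (pi/3)" by (simp add: cis_conv_exp)
  also have "\<dots> = Complex (1/2) (sqrt 3 / 2)" by (simp add: complex_eq_iff cos_60 sin_60)
  finally show ?thesis .
qed

lemma rel: "xq ^ 6 = xq ^ 3 - 1"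
proof -
  have "xq ^ 6 = xq ^ 3 * xq ^ 3" by (simp add: power_add[symmetric])
  also have "\<dots> = xq ^ 3 - 1" unfolding xq3 by (simp add: complex_eq_iff)
  finally show ?thesis .
qed

lemma rels: "sq * sq = 2" unfolding sq_def by (simp flip: of_real_mult)

lemma xq_nz: "xq \<noteq> 0" by (simp add: xq_def)

lemma G1_nf: "G1 = M3 ((-1) * xq ^ 1 + (1) * xq ^ 4) 0 0 0 ((-1) * xq ^ 4) 0 0 0 ((1) * xq ^ 1 + (-1) * xq ^ 4)"
  unfolding G1_def M3_def[symmetric] M3_eq e79_eq e49_eq
  by (intro conjI; ((simp; fail) | algebra | (insert rel, algebra)))

lemma e79s: "e79 / complex_of_real (sqrt 2) = (-1/2) * xq ^ 1 * sq + (1/2) * xq ^ 4 * sq"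
proof -
  have "sq \<noteq> 0" unfolding sq_def by simp
  hence "e79 / complex_of_real (sqrt 2) = xq ^ 7 * sq / 2" unfolding e79_eq sq_def[symmetric]
    using rels by (simp add: field_simps)
  thus ?thesis using rel by algebra
qed

lemma G2_nf: "G2 = M3 ((-1/2) * xq ^ 4) ((-1/2) * xq ^ 1 * sq + (1/2) * xq ^ 4 * sq) ((1/2) * xq ^ 4) ((-1/2) * xq ^ 1 * sq + (1/2) * xq ^ 4 * sq) 0 ((-1/2) * xq ^ 1 * sq + (1/2) * xq ^ 4 * sq) ((1/2) * xq ^ 4) ((-1/2) * xq ^ 1 * sq + (1/2) * xq ^ 4 * sq) ((-1/2) * xq ^ 4)"
  unfolding G2_def M3_def[symmetric] M3_eq e79s e49_eq
  by (intro conjI; simp)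

lemma FUM_nf: "FUM = M3 0 0 ((1) + (-1) * xq ^ 3) 0 ((1) + (-1) * xq ^ 3) 0 ((1) + (-1) * xq ^ 3) 0 0"
  unfolding FUM_def Jmat_def M3_def omega_eq using rel
  by (simp add: vec_eq_iff forall_3)

lemma A_nf: "G1 ** G2 = M3 ((1/2) * xq ^ 2) ((-1/2) * xq ^ 5 * sq) ((-1/2) * xq ^ 2) ((1/2) * xq ^ 2 * sq) 0 ((1/2) * xq ^ 2 * sq) ((1/2) * xq ^ 2) ((1/2) * xq ^ 5 * sq) ((-1/2) * xq ^ 2)"
  unfolding G1_nf G2_nf M3_mult M3_eq
  by (intro conjI; ((simp; fail) | algebra | (insert rel rels, algebra)))

lemma B1_nf: "G2 ** G1 = M3 ((1/2) * xq ^ 2) ((1/2) * xq ^ 2 * sq) ((1/2) * xq ^ 2) ((-1/2) * xq ^ 5 * sq) 0 ((1/2) * xq ^ 5 * sq) ((-1/2) * xq ^ 2) ((1/2) * xq ^ 2 * sq) ((-1/2) * xq ^ 2)"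
  unfolding G1_nf G2_nf M3_mult M3_eq
  by (intro conjI; ((simp; fail) | algebra | (insert rel rels, algebra)))

lemma B2_nf: "G2 ** (M3 ((1/2) * xq ^ 2) ((1/2) * xq ^ 2 * sq) ((1/2) * xq ^ 2) ((-1/2) * xq ^ 5 * sq) 0 ((1/2) * xq ^ 5 * sq) ((-1/2) * xq ^ 2) ((1/2) * xq ^ 2 * sq) ((-1/2) * xq ^ 2)) = M3 ((1/2)) 0 ((1/2) + (-1) * xq ^ 3) 0 ((-1)) 0 ((-1/2) + (1) * xq ^ 3) 0 ((-1/2))"
  unfolding G2_nf M3_mult M3_eq
  by (intro conjI; ((simp; fail) | algebra | (insert rel rels, algebra)))

lemma B_nf: "G2 ** (M3 ((1/2)) 0 ((1/2) + (-1) * xq ^ 3) 0 ((-1)) 0 ((-1/2) + (1) * xq ^ 3) 0 ((-1/2))) = M3 ((-1/2) * xq ^ 1) ((1/2) * xq ^ 1 * sq + (-1/2) * xq ^ 4 * sq) ((-1/2) * xq ^ 1) ((-1/2) * xq ^ 1 * sq) 0 ((1/2) * xq ^ 1 * sq) ((1/2) * xq ^ 1) ((1/2) * xq ^ 1 * sq + (-1/2) * xq ^ 4 * sq) ((1/2) * xq ^ 1)"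
  unfolding G2_nf M3_mult M3_eq
  by (intro conjI; ((simp; fail) | algebra | (insert rel rels, algebra)))

lemma AB_nf: "(M3 ((1/2) * xq ^ 2) ((-1/2) * xq ^ 5 * sq) ((-1/2) * xq ^ 2) ((1/2) * xq ^ 2 * sq) 0 ((1/2) * xq ^ 2 * sq) ((1/2) * xq ^ 2) ((1/2) * xq ^ 5 * sq) ((-1/2) * xq ^ 2)) ** (M3 ((-1/2) * xq ^ 1) ((1/2) * xq ^ 1 * sq + (-1/2) * xq ^ 4 * sq) ((-1/2) * xq ^ 1) ((-1/2) * xq ^ 1 * sq) 0 ((1/2) * xq ^ 1 * sq) ((1/2) * xq ^ 1) ((1/2) * xq ^ 1 * sq + (-1/2) * xq ^ 4 * sq) ((1/2) * xq ^ 1)) = M3 ((-1/2)) 0 ((1/2) + (-1) * xq ^ 3) 0 ((1)) 0 ((1/2) + (-1) * xq ^ 3) 0 ((-1/2))"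
  unfolding  M3_mult M3_eq
  by (intro conjI; ((simp; fail) | algebra | (insert rel rels, algebra)))

lemma BA_nf: "(M3 ((-1/2) * xq ^ 1) ((1/2) * xq ^ 1 * sq + (-1/2) * xq ^ 4 * sq) ((-1/2) * xq ^ 1) ((-1/2) * xq ^ 1 * sq) 0 ((1/2) * xq ^ 1 * sq) ((1/2) * xq ^ 1) ((1/2) * xq ^ 1 * sq + (-1/2) * xq ^ 4 * sq) ((1/2) * xq ^ 1)) ** (M3 ((1/2) * xq ^ 2) ((-1/2) * xq ^ 5 * sq) ((-1/2) * xq ^ 2) ((1/2) * xq ^ 2 * sq) 0 ((1/2) * xq ^ 2 * sq) ((1/2) * xq ^ 2) ((1/2) * xq ^ 5 * sq) ((-1/2) * xq ^ 2)) = M3 ((1/2) + (-1/2) * xq ^ 3) 0 ((1/2) + (1/2) * xq ^ 3) 0 ((-1) + (1) * xq ^ 3) 0 ((1/2) + (1/2) * xq ^ 3) 0 ((1/2) + (-1/2) * xq ^ 3)"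
  unfolding  M3_mult M3_eq
  by (intro conjI; ((simp; fail) | algebra | (insert rel rels, algebra)))

lemma C_nf: "FUM ** FUM = M3 ((-1) * xq ^ 3) 0 0 0 ((-1) * xq ^ 3) 0 0 0 ((-1) * xq ^ 3)"
  unfolding FUM_nf M3_mult M3_eq
  by (intro conjI; ((simp; fail) | algebra | (insert rel rels, algebra)))

lemma CBA_nf: "(M3 ((-1) * xq ^ 3) 0 0 0 ((-1) * xq ^ 3) 0 0 0 ((-1) * xq ^ 3)) ** (M3 ((1/2) + (-1/2) * xq ^ 3) 0 ((1/2) + (1/2) * xq ^ 3) 0 ((-1) + (1) * xq ^ 3) 0 ((1/2) + (1/2) * xq ^ 3) 0 ((1/2) + (-1/2) * xq ^ 3)) = M3 ((-1/2)) 0 ((1/2) + (-1) * xq ^ 3) 0 ((1)) 0 ((1/2) + (-1) * xq ^ 3) 0 ((-1/2))"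
  unfolding  M3_mult M3_eq
  by (intro conjI; ((simp; fail) | algebra | (insert rel rels, algebra)))

lemma CG_nf: "(M3 ((-1) * xq ^ 3) 0 0 0 ((-1) * xq ^ 3) 0 0 0 ((-1) * xq ^ 3)) ** G1 = M3 ((1) * xq ^ 1) 0 0 0 ((-1) * xq ^ 1 + (1) * xq ^ 4) 0 0 0 ((-1) * xq ^ 1)"
  unfolding G1_nf M3_mult M3_eq
  by (intro conjI; ((simp; fail) | algebra | (insert rel rels, algebra)))

lemma CCG_nf: "(M3 ((-1) * xq ^ 3) 0 0 0 ((-1) * xq ^ 3) 0 0 0 ((-1) * xq ^ 3)) ** (M3 ((1) * xq ^ 1) 0 0 0 ((-1) * xq ^ 1 + (1) * xq ^ 4) 0 0 0 ((-1) * xq ^ 1)) = M3 ((-1) * xq ^ 4) 0 0 0 ((1) * xq ^ 1) 0 0 0 ((1) * xq ^ 4)"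
  unfolding  M3_mult M3_eq
  by (intro conjI; ((simp; fail) | algebra | (insert rel rels, algebra)))

lemma Fr_gen: "G1 \<in> Fr" "G2 \<in> Fr" "FUM \<in> Fr"
  unfolding Fr_def by (auto intro: generate.incl)

lemma Fr_mult: "a \<in> Fr \<Longrightarrow> b \<in> Fr \<Longrightarrow> a ** b \<in> Fr"
  unfolding Fr_def using generate.eng[of a SU_grp "{G1, G2, FUM}" b]
  by (simp add: SU_grp_def)

lemma rel_ab: "(G1 ** G2) ** (G2 ** (G2 ** (G2 ** G1))) =
   (FUM ** FUM) ** ((G2 ** (G2 ** (G2 ** G1))) ** (G1 ** G2))"
  by (simp only: A_nf B1_nf B2_nf B_nf AB_nf BA_nf C_nf CBA_nf)

lemma comm_c: "(FUM ** FUM) ** X = X ** (FUM ** FUM)"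
  unfolding C_nf by (rule M3_scalar_comm)

lemma cc_ne: "(FUM ** FUM) ** ((FUM ** FUM) ** G1) \<noteq> G1"
proof
  assume "(FUM ** FUM) ** ((FUM ** FUM) ** G1) = G1"
  hence "M3 ((-1) * xq ^ 4) 0 0 0 ((1) * xq ^ 1) 0 0 0 ((1) * xq ^ 4) = G1"
    by (simp only: C_nf CG_nf CCG_nf)
  hence "M3 ((-1) * xq ^ 4) 0 0 0 ((1) * xq ^ 1) 0 0 0 ((1) * xq ^ 4) =
     M3 ((-1) * xq ^ 1 + (1) * xq ^ 4) 0 0 0 ((-1) * xq ^ 4) 0 0 0 ((1) * xq ^ 1 + (-1) * xq ^ 4)"
    by (simp only: G1_nf)
  hence h: "(-1) * xq ^ 4 = (-1) * xq ^ 1 + 1 * xq ^ 4" unfolding M3_eq by (rule conjunct1)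
  have "xq * (2 * xq ^ 3 - 1) = 0" using h by algebra
  hence "2 * xq ^ 3 = 1" using xq_nz by simp
  thus False unfolding xq3 by (simp add: complex_eq_iff)
qed

lemma unitary_det: "X \<in> unitary_set \<Longrightarrow> det X \<noteq> 0"
proof
  assume "X \<in> unitary_set" "det X = 0"
  have "X ** ctrans X = mat 1" using \<open>X \<in> unitary_set\<close> by (simp add: unitary_set_def)
  hence "det (X ** ctrans X) = 1" by simp
  hence "det X * det (ctrans X) = 1" by (simp add: det_mul)
  thus False using \<open>det X = 0\<close> by simp
qed

theorem theorem12:
  shows "\<not> (\<exists>H. subgroup H (U_grp :: (complex^2^2) monoid) \<and> finite H \<and>
            (SU_grp :: (complex^3^3) monoid)\<lparr>carrier := Fr\<rparr> \<cong> (U_grp :: (complex^2^2) monoid)\<lparr>carrier := H\<rparr>)"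
proof
  assume "\<exists>H. subgroup H (U_grp :: (complex^2^2) monoid) \<and> finite H \<and>
            (SU_grp :: (complex^3^3) monoid)\<lparr>carrier := Fr\<rparr> \<cong> (U_grp :: (complex^2^2) monoid)\<lparr>carrier := H\<rparr>"
  then obtain H where sub: "subgroup H (U_grp :: (complex^2^2) monoid)"
    and iso: "(SU_grp :: (complex^3^3) monoid)\<lparr>carrier := Fr\<rparr> \<cong> (U_grp :: (complex^2^2) monoid)\<lparr>carrier := H\<rparr>"
    by blast
  then obtain \<phi> where "\<phi> \<in> iso ((SU_grp :: (complex^3^3) monoid)\<lparr>carrier := Fr\<rparr>) ((U_grp :: (complex^2^2) monoid)\<lparr>carrier := H\<rparr>)"
    unfolding is_iso_def by blast
  hence ph: "\<And>x. x \<in> Fr \<Longrightarrow> \<phi> x \<in> H"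
    and hm: "\<And>x y. x \<in> Fr \<Longrightarrow> y \<in> Fr \<Longrightarrow> \<phi> (x ** y) = \<phi> x ** \<phi> y"
    and inj: "inj_on \<phi> Fr"
    by (auto simp: iso_def hom_def SU_grp_def U_grp_def bij_betw_def)
  have Hu: "H \<subseteq> unitary_set" using subgroup.subset[OF sub] by (simp add: U_grp_def)
  define a where "a = G1 ** G2"
  define b where "b = G2 ** (G2 ** (G2 ** G1))"
  define c where "c = FUM ** FUM"
  have aF: "a \<in> Fr" and bF: "b \<in> Fr" and cF: "c \<in> Fr" and gF: "G1 \<in> Fr"
    unfolding a_def b_def c_def by (auto intro!: Fr_mult Fr_gen)
  have "\<phi> a ** \<phi> b = \<phi> c ** (\<phi> b ** \<phi> a)"
    using rel_ab aF bF cF by (simp add: a_def b_def c_def hm[symmetric] Fr_mult)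
  moreover have "\<phi> c ** \<phi> a = \<phi> a ** \<phi> c"
    using comm_c aF cF by (simp add: c_def hm[symmetric] Fr_mult)
  moreover have "\<phi> c ** \<phi> b = \<phi> b ** \<phi> c"
    using comm_c bF cF by (simp add: c_def hm[symmetric] Fr_mult)
  moreover have "det (\<phi> a) \<noteq> 0" using ph[OF aF] Hu unitary_det by blast
  moreover have "det (\<phi> b) \<noteq> 0" using ph[OF bF] Hu unitary_det by blast
  ultimately have cc: "\<phi> c ** \<phi> c = mat 1" using key2 by blast
  have "\<phi> (c ** (c ** G1)) = \<phi> G1"
    using cF gF cc by (simp add: hm Fr_mult matrix_mul_assoc matrix_mul_lid)
  hence "c ** (c ** G1) = G1" using inj cF gF by (simp add: inj_on_def Fr_mult)
  thus False using cc_ne by (simp add: c_def)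
qed

end
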